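(* For every integer $m\geq 1$, let \[F_m(q)=1+\sum_{k=1}^{m-1}(-1)^k\prod_{i=0}^{k-1}\left(\frac{1}{q^{m-1-i}}-1\right).\] Then, as formal Laurent series in $q$, \[\sum_{n=1}^{\infty}a_m(n)q^n=\frac{F_m(q)}{(q;q)_\infty}-\mathcal{D}_m,\] where $\mathcal{D}_m$ is the sum of the terms with exponent of $q$ less than or equal to $0$ in the Laurent expansion of $F_m(q)/(q;q)_\infty$.
   Context: $a_m(n)$ is the number of partitions of $n$ in which the smallest part occurs at least $m$ times. $(a;q)_\infty=\prod_{i\geq 0}(1-aq^i)$, so $1/(q;q)_\infty=\sum_{n\geq0}p(n)q^n$ with $p(n)$ the number of partitions of $n$. Empty sums are $0$ and empty products are $1$. *)

theory Defs
  imports "HOL-Library.Multiset" "HOL-Computational_Algebra.Formal_Laurent_Series"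
begin

definition int_partitions :: "nat \<Rightarrow> nat multiset set" where
  "int_partitions n = {P. (\<forall>x\<in>#P. 0 < x) \<and> sum_mset P = n}"

definition a_m :: "nat \<Rightarrow> nat \<Rightarrow> nat" where
  "a_m m n = card {P \<in> int_partitions n. P \<noteq> {#} \<and> m \<le> count P (Min (set_mset P))}"

text \<open>(q;q)_infinity = prod_{i>=0} (1 - q q^i) as a formal power series:
  the n-th coefficient is that of the (stable) finite product over i < n.\<close>
definition qq_inf :: "rat fps" where
  "qq_inf = Abs_fps (\<lambda>n. (\<Prod>i<n. 1 - fps_X * fps_X ^ i) $ n)"

definition F_m :: "nat \<Rightarrow> rat fls" where
  "F_m m = 1 + (\<Sum>k=1..m-1. (-1) ^ k * (\<Prod>i=0..k-1. fls_X_inv ^ (m - 1 - i) - 1))"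

definition G_m :: "nat \<Rightarrow> rat fls" where
  "G_m m = F_m m / fps_to_fls qq_inf"

definition D_m :: "nat \<Rightarrow> rat fls" where
  "D_m m = Abs_fls (\<lambda>n. if n \<le> 0 then fls_nth (G_m m) n else 0)"

end

theory Submission
  imports Defs
begin


lemma mem_le_sum_mset: "(x::nat) \<in># M \<Longrightarrow> x \<le> sum_mset M"
  by (metis le_add1 multi_member_split sum_mset.add_mset)

lemma size_le_sum_mset: "(\<forall>x\<in>#M. 0 < (x::nat)) \<Longrightarrow> size M \<le> sum_mset M"
proof (induction M)
  case empty then show ?case by simp
next
  case (add x M) then show ?case by auto
qed

lemma finite_int_partitions: "finite (int_partitions n)"
proof -
  have "int_partitions n \<subseteq> mset ` {xs. set xs \<subseteq> {0..n} \<and> length xs \<le> n}"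
  proof
    fix P assume P: "P \<in> int_partitions n"
    then have "\<forall>x\<in>#P. 0 < x" "sum_mset P = n" by (auto simp: int_partitions_def)
    then have "set_mset P \<subseteq> {0..n}" "size P \<le> n"
      using mem_le_sum_mset size_le_sum_mset by fastforce+
    then show "P \<in> mset ` {xs. set xs \<subseteq> {0..n} \<and> length xs \<le> n}"
      by (intro image_eqI[of _ _ "sorted_list_of_multiset P"]) (auto, metis size_mset mset_sorted_list_of_multiset)
  qed
  then show ?thesis by (rule finite_subset) (intro finite_imageI finite_lists_length_le, simp)
qed



lemma Min_rep: "1 \<le> k \<Longrightarrow> \<forall>x\<in>#R. t \<le> (x::nat) \<Longrightarrow> Min (set_mset (R + replicate_mset k t)) = t"
proof -
  assume k: "1 \<le> k" and R: "\<forall>x\<in>#R. t \<le> (x::nat)"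
  have "t \<in># replicate_mset k t" using k by (cases k) auto
  then show ?thesis using R by (intro Min_eqI) (auto split: if_splits)
qed

lemma Min_le_mem: "(x::nat) \<in># P \<Longrightarrow> Min (set_mset P) \<le> x"
  by simp

lemma Min_mem: "P \<noteq> {#} \<Longrightarrow> Min (set_mset P) \<in># (P::nat multiset)"
  by (simp add: Min_in)

definition AS :: "nat \<Rightarrow> nat \<Rightarrow> nat multiset set" where
  "AS k n = {P \<in> int_partitions n. P \<noteq> {#} \<and> k \<le> count P (Min (set_mset P))}"
definition ES :: "nat \<Rightarrow> nat \<Rightarrow> nat multiset set" where
  "ES k n = {P \<in> int_partitions n. P \<noteq> {#} \<and> count P (Min (set_mset P)) = k}"

lemma a_m_AS: "a_m k n = card (AS k n)" by (simp add: a_m_def AS_def)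

lemma a_split: "a_m k n = a_m (Suc k) n + card (ES k n)"
proof -
  have "AS k n = AS (Suc k) n \<union> ES k n" by (auto simp: AS_def ES_def)
  moreover have "AS (Suc k) n \<inter> ES k n = {}" by (auto simp: AS_def ES_def)
  moreover have "finite (AS (Suc k) n)" "finite (ES k n)"
    using finite_int_partitions by (auto simp: AS_def ES_def)
  ultimately show ?thesis by (simp add: a_m_AS card_Un_disjoint)
qed

lemma card_min1:
  assumes k: "1 \<le> k"
  shows "card {P \<in> AS k (n+k). Min (set_mset P) = 1} = card (int_partitions n)"
proof -
  let ?f = "\<lambda>Q. Q + replicate_mset k (1::nat)"
  let ?g = "\<lambda>P. P - replicate_mset k (1::nat)"
  have fQ: "?f Q \<in> {P \<in> AS k (n+k). Min (set_mset P) = 1} \<and> ?g (?f Q) = Q" if Q: "Q \<in> int_partitions n" for Q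
  proof -
      have pos: "\<forall>x\<in>#Q. 1 \<le> x" using Q by (auto simp: int_partitions_def Suc_le_eq)
      have M: "Min (set_mset (Q + replicate_mset k 1)) = 1" using Min_rep[OF k pos] .
      show ?thesis
        using Q k M by (auto simp: AS_def int_partitions_def sum_mset_replicate_mset)
  qed
  have gP: "?g P \<in> int_partitions n \<and> ?f (?g P) = P" if P: "P \<in> {P \<in> AS k (n+k). Min (set_mset P) = 1}" for P
  proof -
      have sub: "replicate_mset k 1 \<subseteq># P"
        using P by (auto simp: AS_def count_le_replicate_mset_subset_eq)
      have "sum_mset (P - replicate_mset k 1) = n"
        using P sub by (auto simp: sum_mset_diff AS_def int_partitions_def sum_mset_replicate_mset)
      moreover have "\<forall>x\<in>#P - replicate_mset k 1. 0 < x"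
        using P by (auto simp: AS_def int_partitions_def dest: in_diffD)
      ultimately show ?thesis using sub by (simp add: int_partitions_def)
  qed
  have "bij_betw ?f (int_partitions n) {P \<in> AS k (n+k). Min (set_mset P) = 1}"
    by (rule bij_betw_byWitness[where f'="?g"]) (use fQ gP in blast)+
  then show ?thesis by (simp add: bij_betw_same_card)
qed

lemma card_min2:
  assumes k: "1 \<le> k"
  shows "card {P \<in> AS k (n+k). Min (set_mset P) \<noteq> 1} = card (ES k n)"
proof -
  let ?f = "\<lambda>Q. Q - replicate_mset k (Min (set_mset Q)) + replicate_mset k (Suc (Min (set_mset Q)))"
  let ?g = "\<lambda>P. P - replicate_mset k (Min (set_mset P)) + replicate_mset k (Min (set_mset P) - 1)"
  have fQ: "?f Q \<in> {P \<in> AS k (n+k). Min (set_mset P) \<noteq> 1} \<and> ?g (?f Q) = Q" if Q: "Q \<in> ES k n" for Q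
  proof -
    define s where "s = Min (set_mset Q)"
    define R where "R = Q - replicate_mset k s"
    have ne: "Q \<noteq> {#}" and cnt: "count Q s = k" and pos: "\<forall>x\<in>#Q. 0 < x" and sm: "sum_mset Q = n"
      using Q by (auto simp: ES_def s_def int_partitions_def)
    have sub: "replicate_mset k s \<subseteq># Q" using cnt by (simp flip: count_le_replicate_mset_subset_eq)
    have QR: "Q = R + replicate_mset k s" using sub by (simp add: R_def)
    have Rgt: "\<forall>x\<in>#R. s < x"
    proof
      fix x assume x: "x \<in># R"
      then have "x \<in># Q" by (auto simp: R_def dest: in_diffD)
      then have sx: "s \<le> x" by (simp add: s_def)
      have "count R s = 0" using cnt unfolding R_def by simp
      then have "x \<noteq> s" using x by (metis not_in_iff)
      then show "s < x" using sx by simp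
    qed
    have spos: "0 < s" using pos Min_mem[OF ne] by (simp add: s_def)
    have fq: "?f Q = R + replicate_mset k (Suc s)" by (simp add: R_def s_def)
    have Mf: "Min (set_mset (R + replicate_mset k (Suc s))) = Suc s"
      using Min_rep[OF k] Rgt by (simp add: Suc_le_eq)
    have cf: "count (R + replicate_mset k (Suc s)) (Suc s) \<ge> k" by simp
    have sumR: "sum_mset R + k * s = n" using sm QR by (simp add: sum_mset_replicate_mset)
    have "R + replicate_mset k (Suc s) \<in> int_partitions (n+k)"
      using sumR pos QR by (auto simp: int_partitions_def sum_mset_replicate_mset)
    then have in1: "?f Q \<in> {P \<in> AS k (n+k). Min (set_mset P) \<noteq> 1}"
      using fq Mf cf spos k by (auto simp: AS_def)
    have "?g (?f Q) = Q" using fq Mf QR by simp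
    with in1 show ?thesis by blast
  qed
  have gP: "?g P \<in> ES k n \<and> ?f (?g P) = P" if P: "P \<in> {P \<in> AS k (n+k). Min (set_mset P) \<noteq> 1}" for P
  proof -
    define t where "t = Min (set_mset P)"
    define R where "R = P - replicate_mset k t"
    have ne: "P \<noteq> {#}" and cnt: "k \<le> count P t" and pos: "\<forall>x\<in>#P. 0 < x" and sm: "sum_mset P = n + k"
      and t1: "t \<noteq> 1"
      using P by (auto simp: AS_def t_def int_partitions_def)
    have tpos: "0 < t" using pos Min_mem[OF ne] by (simp add: t_def)
    have sub: "replicate_mset k t \<subseteq># P" using cnt by (simp flip: count_le_replicate_mset_subset_eq)
    have PR: "P = R + replicate_mset k t" using sub by (simp add: R_def)
    have Rge: "\<forall>x\<in>#R. t \<le> x"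
    proof
      fix x assume x: "x \<in># R"
      then have "x \<in># P" by (auto simp: R_def dest: in_diffD)
      then show "t \<le> x" by (simp add: t_def)
    qed
    have gp: "?g P = R + replicate_mset k (t - 1)" by (simp add: R_def t_def)
    have Mg: "Min (set_mset (R + replicate_mset k (t - 1))) = t - 1"
    proof -
      have "\<forall>x\<in>#R. t - 1 \<le> x" using Rge by auto
      then show ?thesis by (rule Min_rep[OF k])
    qed
    have nR: "t - 1 \<notin># R"
    proof
      assume "t - 1 \<in># R"
      then have "t \<le> t - 1" using Rge by blast
      then show False using tpos by simp
    qed
    have cg: "count (R + replicate_mset k (t - 1)) (t - 1) = k"
      using nR by (simp add: not_in_iff)
    have sumR: "sum_mset R + k * t = n + k" using sm PR by (simp add: sum_mset_replicate_mset)
    have "k * t = k * (t - 1) + k" using tpos by (cases t) auto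
    then have "sum_mset (R + replicate_mset k (t - 1)) = n" using sumR by (simp add: sum_mset_replicate_mset)
    moreover have "\<forall>x\<in>#R + replicate_mset k (t - 1). 0 < x"
      using pos PR tpos t1 by auto
    ultimately have in1: "?g P \<in> ES k n" using gp Mg cg k by (auto simp: ES_def int_partitions_def)
    have "?f (?g P) = P" using gp Mg PR tpos by simp
    with in1 show ?thesis by blast
  qed
  have "bij_betw ?f (ES k n) {P \<in> AS k (n+k). Min (set_mset P) \<noteq> 1}"
    by (rule bij_betw_byWitness[where f'="?g"]) (use fQ gP in blast)+
  then show ?thesis by (simp add: bij_betw_same_card)
qed

lemma a_rec:
  assumes k: "1 \<le> k"
  shows "a_m k (n+k) + a_m (Suc k) n = card (int_partitions n) + a_m k n"
proof -
  have "AS k (n+k) = {P \<in> AS k (n+k). Min (set_mset P) = 1} \<union> {P \<in> AS k (n+k). Min (set_mset P) \<noteq> 1}"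
    by auto
  moreover have "finite (AS k (n+k))" using finite_int_partitions by (simp add: AS_def)
  ultimately have "card (AS k (n+k)) = card {P \<in> AS k (n+k). Min (set_mset P) = 1} + card {P \<in> AS k (n+k). Min (set_mset P) \<noteq> 1}"
    by (metis (no_types, lifting) card_Un_disjoint disjoint_iff finite_Un mem_Collect_eq)
  then have "a_m k (n+k) = card (int_partitions n) + card (ES k n)"
    using card_min1[OF k] card_min2[OF k] by (simp add: a_m_AS)
  then show ?thesis using a_split[of k n] by simp
qed

lemma a_1: "1 \<le> n \<Longrightarrow> a_m 1 n = card (int_partitions n)"
proof -
  assume n: "1 \<le> n"
  have "{P \<in> int_partitions n. P \<noteq> {#} \<and> 1 \<le> count P (Min (set_mset P))} = int_partitions n"
  proof -
    have "P \<noteq> {#}" if "sum_mset P = n" for P using that n by auto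
    then show ?thesis using n by (auto simp: int_partitions_def Min_mem Suc_le_eq)
  qed
  then show ?thesis by (simp add: a_m_def)
qed



definition pk :: "nat \<Rightarrow> nat \<Rightarrow> nat" where
  "pk N n = card {P \<in> int_partitions n. \<forall>x\<in>#P. x \<le> N}"

lemma pk_rec: "pk (Suc N) n = pk N n + (if Suc N \<le> n then pk (Suc N) (n - Suc N) else 0)"
proof -
  let ?S = "{P \<in> int_partitions n. \<forall>x\<in>#P. x \<le> Suc N}"
  let ?S1 = "{P \<in> int_partitions n. \<forall>x\<in>#P. x \<le> N}"
  let ?S2 = "{P \<in> int_partitions n. (\<forall>x\<in>#P. x \<le> Suc N) \<and> Suc N \<in># P}"
  let ?T = "{P \<in> int_partitions (n - Suc N). \<forall>x\<in>#P. x \<le> Suc N}"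
  have split: "?S = ?S1 \<union> ?S2" by (auto simp: le_Suc_eq)
  have fin: "finite ?S1" "finite ?S2" using finite_int_partitions by auto
  have disj: "?S1 \<inter> ?S2 = {}" by auto
  have c2: "card ?S2 = (if Suc N \<le> n then card ?T else 0)"
  proof (cases "Suc N \<le> n")
    case True
    have "bij_betw (\<lambda>Q. add_mset (Suc N) Q) ?T ?S2"
    proof (rule bij_betw_byWitness[where f'="\<lambda>P. P - {#Suc N#}"])
      show "\<forall>a\<in>?T. add_mset (Suc N) a - {#Suc N#} = a" by simp
      show "\<forall>a\<in>?S2. add_mset (Suc N) (a - {#Suc N#}) = a" by simp
      show "(\<lambda>Q. add_mset (Suc N) Q) ` ?T \<subseteq> ?S2"
        using True by (auto simp: int_partitions_def)
      show "(\<lambda>P. P - {#Suc N#}) ` ?S2 \<subseteq> ?T"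
      proof (rule image_subsetI)
        fix P assume "P \<in> ?S2"
        then have P: "P \<in> int_partitions n" "\<forall>x\<in>#P. x \<le> Suc N" "Suc N \<in># P" by auto
        then obtain Q where Q: "P = add_mset (Suc N) Q" by (metis multi_member_split)
        show "P - {#Suc N#} \<in> ?T" using P Q by (auto simp: int_partitions_def)
      qed
    qed
    then show ?thesis using True by (simp add: bij_betw_same_card)
  next
    case False
    have "?S2 = {}"
    proof (rule ccontr)
      assume "?S2 \<noteq> {}"
      then obtain P where P: "P \<in> int_partitions n" "Suc N \<in># P" by auto
      then have "Suc N \<le> n" using mem_le_sum_mset by (auto simp: int_partitions_def)
      with False show False by simp
    qed
    then show ?thesis using False by (metis (no_types, lifting) card.empty)
  qed
  have "pk (Suc N) n = card ?S1 + card ?S2"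
    unfolding pk_def split by (rule card_Un_disjoint[OF fin disj])
  then show ?thesis using c2 by (simp add: pk_def)
qed

lemma pk_0: "pk 0 n = (if n = 0 then 1 else 0)"
proof -
  have "{P \<in> int_partitions n. \<forall>x\<in>#P. x \<le> 0} = (if n = 0 then {{#}} else {})"
  proof -
    have "P \<in> int_partitions n \<and> (\<forall>x\<in>#P. x \<le> 0) \<longleftrightarrow> P = {#} \<and> n = 0" for P
    proof
      assume a: "P \<in> int_partitions n \<and> (\<forall>x\<in>#P. x \<le> 0)"
      then have "\<forall>x\<in>#P. False" by (fastforce simp: int_partitions_def)
      then have "P = {#}" by (metis multiset_nonemptyE)
      then show "P = {#} \<and> n = 0" using a by (simp add: int_partitions_def)
    qed (simp add: int_partitions_def)
    then show ?thesis by auto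
  qed
  then show ?thesis by (simp add: pk_def)
qed

lemma pk_stab: "n \<le> N \<Longrightarrow> pk N n = card (int_partitions n)"
proof -
  assume "n \<le> N"
  then have "{P \<in> int_partitions n. \<forall>x\<in>#P. x \<le> N} = int_partitions n"
    using mem_le_sum_mset by (fastforce simp: int_partitions_def)
  then show ?thesis by (simp add: pk_def)
qed

definition Pr :: "nat \<Rightarrow> rat fps" where "Pr N = (\<Prod>i<N. 1 - fps_X * fps_X ^ i)"
definition AP :: "nat \<Rightarrow> rat fps" where "AP N = Abs_fps (\<lambda>n. of_nat (pk N n))"

lemma Pr_AP: "Pr N * AP N = 1"
proof (induction N)
  case 0
  show ?case by (auto simp: Pr_def AP_def pk_0 intro!: fps_ext)
next
  case (Suc N)
  have "(1 - fps_X ^ Suc N) * AP (Suc N) = AP N"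
  proof (rule fps_ext)
    fix n
    show "((1 - fps_X ^ Suc N) * AP (Suc N)) $ n = AP N $ n"
      by (simp add: algebra_simps fps_X_power_mult_nth AP_def pk_rec[of N n]; arith)
  qed
  then have "Pr (Suc N) * AP (Suc N) = Pr N * AP N"
    by (simp add: Pr_def mult.assoc mult.commute)
  then show ?case using Suc by simp
qed

lemma Pr_stab: "j \<le> N \<Longrightarrow> Pr N $ j = Pr j $ j"
proof (induction N rule: dec_induct)
  case base then show ?case by simp
next
  case (step N)
  have e: "Pr (Suc N) = Pr N - fps_X ^ Suc N * Pr N" by (simp add: Pr_def algebra_simps)
  have "(fps_X ^ Suc N * Pr N) $ j = 0" using step by (subst fps_X_power_mult_nth) simp
  then show ?case using step by (simp only: e fps_sub_nth)
qed

definition pgen :: "rat fps" where "pgen = Abs_fps (\<lambda>n. of_nat (card (int_partitions n)))"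

lemma euler: "qq_inf * pgen = 1"
proof (rule fps_ext)
  fix n
  have "(qq_inf * pgen) $ n = (\<Sum>i=0..n. Pr n $ i * AP n $ (n - i))"
    unfolding fps_mult_nth
  proof (intro sum.cong refl)
    fix i assume i: "i \<in> {0..n}"
    have "qq_inf $ i = Pr i $ i" by (simp add: qq_inf_def Pr_def)
    also have "\<dots> = Pr n $ i" using i Pr_stab[of i n] by simp
    finally show "qq_inf $ i * pgen $ (n - i) = Pr n $ i * AP n $ (n - i)"
      by (simp add: pgen_def AP_def pk_stab)
  qed
  also have "\<dots> = (Pr n * AP n) $ n" by (simp add: fps_mult_nth)
  finally show "(qq_inf * pgen) $ n = 1 $ n" by (simp add: Pr_AP)
qed



notation fls_nth (infixl \<open>$$\<close> 75)

definition TT :: "nat \<Rightarrow> nat \<Rightarrow> rat fls" where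
  "TT m k = (\<Prod>i<k. fls_X_inv ^ (m - 1 - i) - 1)"

lemma F_alt: "F_m (Suc j) = (\<Sum>k<Suc j. (-1) ^ k * TT (Suc j) k)"
proof -
  have "(\<Sum>k<Suc j. (-1) ^ k * TT (Suc j) k) = 1 + (\<Sum>k<j. (-1) ^ Suc k * TT (Suc j) (Suc k))"
    by (subst sum.lessThan_Suc_shift) (simp add: TT_def)
  also have "(\<Sum>k<j. (-1) ^ Suc k * TT (Suc j) (Suc k)) = (\<Sum>k=1..j. (-1) ^ k * (\<Prod>i=0..k-1. fls_X_inv ^ (Suc j - 1 - i) - 1))"
  proof -
    have "(\<Sum>k=1..j. (-1) ^ k * (\<Prod>i=0..k-1. fls_X_inv ^ (Suc j - 1 - i) - 1 :: rat fls))
        = (\<Sum>k<j. (-1) ^ Suc k * (\<Prod>i=0..k. fls_X_inv ^ (Suc j - 1 - i) - 1))"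
      by (simp add: sum.atLeast1_atMost_eq atLeast0AtMost)
    then show ?thesis by (simp add: TT_def atLeast0AtMost lessThan_Suc_atMost)
  qed
  finally show ?thesis by (simp add: F_m_def)
qed

lemma F_rec: "F_m (Suc (Suc j)) = 1 - (fls_X_inv ^ Suc j - 1) * F_m (Suc j)"
proof -
  have T: "TT (Suc (Suc j)) (Suc k) = (fls_X_inv ^ Suc j - 1) * TT (Suc j) k" for k
    unfolding TT_def by (subst prod.lessThan_Suc_shift) simp
  have "F_m (Suc (Suc j)) = 1 + (\<Sum>k<Suc j. (-1) ^ Suc k * TT (Suc (Suc j)) (Suc k))"
    unfolding F_alt by (subst sum.lessThan_Suc_shift) (simp add: TT_def)
  also have "\<dots> = 1 - (fls_X_inv ^ Suc j - 1) * F_m (Suc j)"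
  proof -
    have "(\<Sum>k<Suc j. (-1) ^ Suc k * TT (Suc (Suc j)) (Suc k))
        = (\<Sum>k<Suc j. - ((fls_X_inv ^ Suc j - 1) * ((-1) ^ k * TT (Suc j) k)))"
      unfolding T by (intro sum.cong) auto
    also have "\<dots> = - ((fls_X_inv ^ Suc j - 1) * F_m (Suc j))"
      unfolding F_alt by (simp only: sum_negf sum_distrib_left)
    finally show ?thesis by simp
  qed
  finally show ?thesis .
qed

lemma G_alt: "G_m m = F_m m * fps_to_fls pgen"
proof -
  have "fps_to_fls qq_inf * fps_to_fls pgen = 1"
    using euler by (metis fls_times_fps_to_fls fps_one_to_fls)
  then have "inverse (fps_to_fls qq_inf) = fps_to_fls pgen" by (rule inverse_unique)
  then show ?thesis by (simp add: G_m_def divide_inverse)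
qed

lemma G_rec: "G_m (Suc (Suc j)) $$ n = fps_to_fls pgen $$ n - G_m (Suc j) $$ (n + int (Suc j)) + G_m (Suc j) $$ n"
proof -
  have "G_m (Suc (Suc j)) = fps_to_fls pgen - fls_X_inv ^ Suc j * G_m (Suc j) + G_m (Suc j)"
    unfolding G_alt F_rec by (simp add: algebra_simps)
  then show ?thesis by (simp only: fls_X_inv_power_times_conv_shift fls_plus_nth fls_minus_nth fls_shift_nth)
qed

lemma G_main: "\<forall>n\<ge>1. G_m (Suc j) $$ n = of_nat (a_m (Suc j) (nat n))"
proof (induction j)
  case 0
  have "G_m 1 = fps_to_fls pgen" by (simp add: G_alt F_m_def)
  show ?case
  proof (intro allI impI)
    fix n :: int assume "1 \<le> n"
    then have "1 \<le> nat n" by simp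
    then show "G_m (Suc 0) $$ n = of_nat (a_m (Suc 0) (nat n))"
      using \<open>G_m 1 = fps_to_fls pgen\<close> \<open>1 \<le> n\<close> a_1[OF \<open>1 \<le> nat n\<close>] by (simp add: pgen_def)
  qed
next
  case (Suc j)
  show ?case
  proof (intro allI impI)
    fix n :: int assume n: "1 \<le> n"
    have r: "a_m (Suc j) (nat n + Suc j) + a_m (Suc (Suc j)) (nat n) = card (int_partitions (nat n)) + a_m (Suc j) (nat n)"
      by (rule a_rec) simp
    have e2: "nat (n + (1 + int j)) = Suc (nat n + j)" using n by simp
    have "G_m (Suc (Suc j)) $$ n = of_nat (card (int_partitions (nat n))) - of_nat (a_m (Suc j) (nat n + Suc j)) + of_nat (a_m (Suc j) (nat n))"
      using n Suc.IH by (simp add: G_rec pgen_def e2)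
    also have "\<dots> = of_nat (a_m (Suc (Suc j)) (nat n))"
      using arg_cong[OF r, of "of_nat :: nat \<Rightarrow> rat"] by simp
    finally show "G_m (Suc (Suc j)) $$ n = of_nat (a_m (Suc (Suc j)) (nat n))" .
  qed
qed

theorem theorem3p3:
  fixes m :: nat
  assumes "1 \<le> m"
  shows "Abs_fls (\<lambda>n::int. if 1 \<le> n then of_nat (a_m m (nat n)) else (0::rat))
           = G_m m - D_m m"
proof (rule fls_eqI)
  fix n :: int
  obtain j where m: "m = Suc j" using assms by (cases m) auto
  obtain N where N: "\<forall>n<N. G_m m $$ n = 0" by (rule fls_nth_vanishes_belowE)
  have D: "D_m m $$ n = (if n \<le> 0 then G_m m $$ n else 0)"
    unfolding D_m_def by (rule nth_Abs_fls_lower_bound[of N]) (simp add: N)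
  have L: "Abs_fls (\<lambda>n::int. if 1 \<le> n then of_nat (a_m m (nat n)) else (0::rat)) $$ n
      = (if 1 \<le> n then of_nat (a_m m (nat n)) else 0)"
    by (rule nth_Abs_fls_lower_bound[of 1]) simp
  show "Abs_fls (\<lambda>n::int. if 1 \<le> n then of_nat (a_m m (nat n)) else (0::rat)) $$ n = (G_m m - D_m m) $$ n"
  proof -
    have G: "\<forall>n\<ge>1. G_m m $$ n = of_nat (a_m m (nat n))" using G_main[of j] m by simp
    show ?thesis by (simp add: L D G)
  qed
qed


end
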